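(* If $\mathbb{C}$ is an isostable squares category, then $S^{\square}_\bullet\mathbb{C}$ is a simplicial groupoid, i.e. every category $S^{\square}_n\mathbb{C}$ is a groupoid.
   Context: A squares category is a flat double category (squares uniquely determined by their boundary; we say a boundary "is a square") with a distinguished object $O$ initial in the horizontal category $\mathcal{H}_{\mathbb{C}}$ (morphisms $\rightarrowtail$) and terminal in the vertical category $\mathcal{V}_{\mathbb{C}}$ (morphisms $\twoheadrightarrow$). A vertical $f:A\twoheadrightarrow B$ is a vertical weak equivalence if the boundary (top $O\rightarrowtail A$, left $\mathrm{id}_O$, right $f$, bottom $O\rightarrowtail B$) is a square; a horizontal $g:A\rightarrowtail B$ is a horizontal weak equivalence if the boundary (top $g$, left $A\twoheadrightarrow O$, right $B\twoheadrightarrow O$, bottom $\mathrm{id}_O$) is a square. Vertical natural transformations between double functors of flat double categories: vertical components $\tau_A$ with $(Ff,\tau_A,\tau_{A'},Gf)$ a square for each horizontal $f$ and commuting naturality squares in the vertical category; $\mathrm{Fun}^v$ is the functor category. With $\boxdot$ the flat double category generated by one square (corners $a,b,c,d$, horizontal $a\rightarrowtail b,c\rightarrowtail d$, vertical $a\twoheadrightarrow c,b\twoheadrightarrow d$), $i:\mathrm{span}\hookrightarrow\boxdot$ on $a\rightarrowtail b,a\twoheadrightarrow c$ and $j:\mathrm{cospan}\hookrightarrow\boxdot$ on $b\twoheadrightarrow d,c\rightarrowtail d$: a squares category is stable if (i) $i^*$ on $\mathrm{Fun}^v(-,\mathbb{C})$ has a section functor $s$, (ii) there is a natural transformation $w:si^*\Rightarrow\mathrm{id}$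 with components the identity at $a,b,c$, (iii) $j^*$ has a section functor $t$, (iv) there is a natural transformation $u:tj^*\Rightarrow\mathrm{id}$ with components the identity at $b,c,d$ and a vertical weak equivalence at $a$. It is isostable if it is stable, its weak equivalences are invertible, and for every boundary with top $f:A\rightarrowtail B$, bottom $k:C\rightarrowtail D$ and vertical isomorphisms $g:A\twoheadrightarrow C$, $h:B\twoheadrightarrow D$, this boundary is a square iff the boundary with top $k$, left $g^{-1}$, right $h^{-1}$, bottom $f$ is a square. $S^{\square}_n\mathbb{C}$: objects are families $(A_{jk})_{0\le j\le k\le n}$ with $A_{jj}=O$, horizontal $A_{jk}\rightarrowtail A_{j,k+1}$, vertical $A_{jk}\twoheadrightarrow A_{j+1,k}$, each unit cell ($j<k<n$) a square; morphisms are families of vertical morphisms $A_{jk}\twoheadrightarrow A'_{jk}$ such that every cell formed with a horizontal generator is a square and every cell formed with a vertical generator commutes in $\mathcal{V}_{\mathbb{C}}$. Simplicial structure by reindexing $(A_{jk})\mapsto(A_{\theta(j)\theta(k)})$. *)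

theory Defs
  imports Main
begin

text \<open>A flat double category: objects, a horizontal category (morphisms 'h),
a vertical category (morphisms 'v), and a predicate Sq t l r b saying that the
boundary with top t, left l, right r, bottom b is a square.  Composition is
written in diagrammatic-reverse order: hcomp g f = g o f.\<close>

record ('o, 'h, 'v) dcat =
  Ob :: "'o set"
  Hor :: "'h set"
  hdom :: "'h \<Rightarrow> 'o"
  hcod :: "'h \<Rightarrow> 'o"
  hcomp :: "'h \<Rightarrow> 'h \<Rightarrow> 'h"
  hid :: "'o \<Rightarrow> 'h"
  Ver :: "'v set"
  vdom :: "'v \<Rightarrow> 'o"
  vcod :: "'v \<Rightarrow> 'o"
  vcomp :: "'v \<Rightarrow> 'v \<Rightarrow> 'v"
  vid :: "'o \<Rightarrow> 'v"
  Sq :: "'h \<Rightarrow> 'v \<Rightarrow> 'v \<Rightarrow> 'h \<Rightarrow> bool"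

definition hcat :: "('o, 'h, 'v, 'z) dcat_scheme \<Rightarrow> bool" where
  "hcat C \<longleftrightarrow>
     (\<forall>f\<in>Hor C. hdom C f \<in> Ob C \<and> hcod C f \<in> Ob C) \<and>
     (\<forall>A\<in>Ob C. hid C A \<in> Hor C \<and> hdom C (hid C A) = A \<and> hcod C (hid C A) = A) \<and>
     (\<forall>f\<in>Hor C. \<forall>g\<in>Hor C. hcod C f = hdom C g \<longrightarrow>
        hcomp C g f \<in> Hor C \<and> hdom C (hcomp C g f) = hdom C f \<and> hcod C (hcomp C g f) = hcod C g) \<and>
     (\<forall>f\<in>Hor C. \<forall>g\<in>Hor C. \<forall>k\<in>Hor C. hcod C f = hdom C g \<longrightarrow> hcod C g = hdom C k \<longrightarrow>
        hcomp C k (hcomp C g f) = hcomp C (hcomp C k g) f) \<and>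
     (\<forall>f\<in>Hor C. hcomp C f (hid C (hdom C f)) = f \<and> hcomp C (hid C (hcod C f)) f = f)"

definition vcat :: "('o, 'h, 'v, 'z) dcat_scheme \<Rightarrow> bool" where
  "vcat C \<longleftrightarrow>
     (\<forall>f\<in>Ver C. vdom C f \<in> Ob C \<and> vcod C f \<in> Ob C) \<and>
     (\<forall>A\<in>Ob C. vid C A \<in> Ver C \<and> vdom C (vid C A) = A \<and> vcod C (vid C A) = A) \<and>
     (\<forall>f\<in>Ver C. \<forall>g\<in>Ver C. vcod C f = vdom C g \<longrightarrow>
        vcomp C g f \<in> Ver C \<and> vdom C (vcomp C g f) = vdom C f \<and> vcod C (vcomp C g f) = vcod C g) \<and>
     (\<forall>f\<in>Ver C. \<forall>g\<in>Ver C. \<forall>k\<in>Ver C. vcod C f = vdom C g \<longrightarrow> vcod C g = vdom C k \<longrightarrow>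
        vcomp C k (vcomp C g f) = vcomp C (vcomp C k g) f) \<and>
     (\<forall>f\<in>Ver C. vcomp C f (vid C (vdom C f)) = f \<and> vcomp C (vid C (vcod C f)) f = f)"

definition flat_dcat :: "('o, 'h, 'v, 'z) dcat_scheme \<Rightarrow> bool" where
  "flat_dcat C \<longleftrightarrow> hcat C \<and> vcat C \<and>
     (\<forall>t l r b. Sq C t l r b \<longrightarrow>
        t \<in> Hor C \<and> l \<in> Ver C \<and> r \<in> Ver C \<and> b \<in> Hor C \<and>
        hdom C t = vdom C l \<and> hcod C t = vdom C r \<and>
        hdom C b = vcod C l \<and> hcod C b = vcod C r) \<and>
     (\<forall>f\<in>Ver C. Sq C (hid C (vdom C f)) f f (hid C (vcod C f))) \<and>
     (\<forall>g\<in>Hor C. Sq C g (vid C (hdom C g)) (vid C (hcod C g)) g) \<and>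
     (\<forall>t l m b t' r b'. Sq C t l m b \<longrightarrow> Sq C t' m r b' \<longrightarrow>
        Sq C (hcomp C t' t) l r (hcomp C b' b)) \<and>
     (\<forall>t l r m l' r' b. Sq C t l r m \<longrightarrow> Sq C m l' r' b \<longrightarrow>
        Sq C t (vcomp C l' l) (vcomp C r' r) b)"

definition squares_cat :: "('o, 'h, 'v, 'z) dcat_scheme \<Rightarrow> 'o \<Rightarrow> bool" where
  "squares_cat C Z \<longleftrightarrow> flat_dcat C \<and> Z \<in> Ob C \<and>
     (\<forall>A\<in>Ob C. \<exists>!f. f \<in> Hor C \<and> hdom C f = Z \<and> hcod C f = A) \<and>
     (\<forall>A\<in>Ob C. \<exists>!f. f \<in> Ver C \<and> vdom C f = A \<and> vcod C f = Z)"

definition hinit :: "('o, 'h, 'v, 'z) dcat_scheme \<Rightarrow> 'o \<Rightarrow> 'o \<Rightarrow> 'h" where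
  "hinit C Z A = (THE f. f \<in> Hor C \<and> hdom C f = Z \<and> hcod C f = A)"

definition vterm :: "('o, 'h, 'v, 'z) dcat_scheme \<Rightarrow> 'o \<Rightarrow> 'o \<Rightarrow> 'v" where
  "vterm C Z A = (THE f. f \<in> Ver C \<and> vdom C f = A \<and> vcod C f = Z)"

definition vweq :: "('o, 'h, 'v, 'z) dcat_scheme \<Rightarrow> 'o \<Rightarrow> 'v \<Rightarrow> bool" where
  "vweq C Z f \<longleftrightarrow> f \<in> Ver C \<and>
     Sq C (hinit C Z (vdom C f)) (vid C Z) f (hinit C Z (vcod C f))"

definition hweq :: "('o, 'h, 'v, 'z) dcat_scheme \<Rightarrow> 'o \<Rightarrow> 'h \<Rightarrow> bool" where
  "hweq C Z g \<longleftrightarrow> g \<in> Hor C \<and>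
     Sq C g (vterm C Z (hdom C g)) (vterm C Z (hcod C g)) (hid C Z)"

definition vinverse :: "('o, 'h, 'v, 'z) dcat_scheme \<Rightarrow> 'v \<Rightarrow> 'v \<Rightarrow> bool" where
  "vinverse C g f \<longleftrightarrow> f \<in> Ver C \<and> g \<in> Ver C \<and> vdom C g = vcod C f \<and> vcod C g = vdom C f \<and>
     vcomp C g f = vid C (vdom C f) \<and> vcomp C f g = vid C (vcod C f)"

definition hinverse :: "('o, 'h, 'v, 'z) dcat_scheme \<Rightarrow> 'h \<Rightarrow> 'h \<Rightarrow> bool" where
  "hinverse C g f \<longleftrightarrow> f \<in> Hor C \<and> g \<in> Hor C \<and> hdom C g = hcod C f \<and> hcod C g = hdom C f \<and>
     hcomp C g f = hid C (hdom C f) \<and> hcomp C f g = hid C (hcod C f)"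

definition viso :: "('o, 'h, 'v, 'z) dcat_scheme \<Rightarrow> 'v \<Rightarrow> bool" where
  "viso C f \<longleftrightarrow> (\<exists>g. vinverse C g f)"

definition hiso :: "('o, 'h, 'v, 'z) dcat_scheme \<Rightarrow> 'h \<Rightarrow> bool" where
  "hiso C f \<longleftrightarrow> (\<exists>g. hinverse C g f)"

text \<open>A double functor boxdot -> C is determined by the image (t, l, r, b) of the
generating square (top a>->b, left a->>c, right b->>d, bottom c>->d), which must
be a square.  A double functor span -> C is a pair (t, l) (a>->b, a->>c); a double
functor cospan -> C is a pair (r, b) (b->>d, c>->d).  Vertical natural
transformations are tuples of vertical components, at (a,b,c,d), (a,b,c), (b,c,d).\<close>

fun sqF :: "('o, 'h, 'v, 'z) dcat_scheme \<Rightarrow> 'h \<times> 'v \<times> 'v \<times> 'h \<Rightarrow> bool" where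
  "sqF C (t, l, r, b) = Sq C t l r b"

fun spanF :: "('o, 'h, 'v, 'z) dcat_scheme \<Rightarrow> 'h \<times> 'v \<Rightarrow> bool" where
  "spanF C (t, l) \<longleftrightarrow> t \<in> Hor C \<and> l \<in> Ver C \<and> hdom C t = vdom C l"

fun cospanF :: "('o, 'h, 'v, 'z) dcat_scheme \<Rightarrow> 'v \<times> 'h \<Rightarrow> bool" where
  "cospanF C (r, b) \<longleftrightarrow> r \<in> Ver C \<and> b \<in> Hor C \<and> vcod C r = hcod C b"

definition vmor :: "('o, 'h, 'v, 'z) dcat_scheme \<Rightarrow> 'v \<Rightarrow> 'o \<Rightarrow> 'o \<Rightarrow> bool" where
  "vmor C f A B \<longleftrightarrow> f \<in> Ver C \<and> vdom C f = A \<and> vcod C f = B"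

fun sqNT :: "('o, 'h, 'v, 'z) dcat_scheme \<Rightarrow> 'h \<times> 'v \<times> 'v \<times> 'h \<Rightarrow> 'h \<times> 'v \<times> 'v \<times> 'h
     \<Rightarrow> 'v \<times> 'v \<times> 'v \<times> 'v \<Rightarrow> bool" where
  "sqNT C (t, l, r, b) (t', l', r', b') (xa, xb, xc, xd) \<longleftrightarrow>
     sqF C (t, l, r, b) \<and> sqF C (t', l', r', b') \<and>
     vmor C xa (hdom C t) (hdom C t') \<and> vmor C xb (hcod C t) (hcod C t') \<and>
     vmor C xc (hdom C b) (hdom C b') \<and> vmor C xd (hcod C b) (hcod C b') \<and>
     Sq C t xa xb t' \<and> Sq C b xc xd b' \<and>
     vcomp C l' xa = vcomp C xc l \<and> vcomp C r' xb = vcomp C xd r"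

fun spanNT :: "('o, 'h, 'v, 'z) dcat_scheme \<Rightarrow> 'h \<times> 'v \<Rightarrow> 'h \<times> 'v \<Rightarrow> 'v \<times> 'v \<times> 'v \<Rightarrow> bool" where
  "spanNT C (t, l) (t', l') (xa, xb, xc) \<longleftrightarrow>
     spanF C (t, l) \<and> spanF C (t', l') \<and>
     vmor C xa (hdom C t) (hdom C t') \<and> vmor C xb (hcod C t) (hcod C t') \<and>
     vmor C xc (vcod C l) (vcod C l') \<and>
     Sq C t xa xb t' \<and> vcomp C l' xa = vcomp C xc l"

fun cospanNT :: "('o, 'h, 'v, 'z) dcat_scheme \<Rightarrow> 'v \<times> 'h \<Rightarrow> 'v \<times> 'h \<Rightarrow> 'v \<times> 'v \<times> 'v \<Rightarrow> bool" where
  "cospanNT C (r, b) (r', b') (xb, xc, xd) \<longleftrightarrow>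
     cospanF C (r, b) \<and> cospanF C (r', b') \<and>
     vmor C xb (vdom C r) (vdom C r') \<and> vmor C xc (hdom C b) (hdom C b') \<and>
     vmor C xd (hcod C b) (hcod C b') \<and>
     Sq C b xc xd b' \<and> vcomp C r' xb = vcomp C xd r"

fun sqId :: "('o, 'h, 'v, 'z) dcat_scheme \<Rightarrow> 'h \<times> 'v \<times> 'v \<times> 'h \<Rightarrow> 'v \<times> 'v \<times> 'v \<times> 'v" where
  "sqId C (t, l, r, b) = (vid C (hdom C t), vid C (hcod C t), vid C (hdom C b), vid C (hcod C b))"

fun spanId :: "('o, 'h, 'v, 'z) dcat_scheme \<Rightarrow> 'h \<times> 'v \<Rightarrow> 'v \<times> 'v \<times> 'v" where
  "spanId C (t, l) = (vid C (hdom C t), vid C (hcod C t), vid C (vcod C l))"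

fun cospanId :: "('o, 'h, 'v, 'z) dcat_scheme \<Rightarrow> 'v \<times> 'h \<Rightarrow> 'v \<times> 'v \<times> 'v" where
  "cospanId C (r, b) = (vid C (vdom C r), vid C (hdom C b), vid C (hcod C b))"

fun sqComp :: "('o, 'h, 'v, 'z) dcat_scheme \<Rightarrow> 'v \<times> 'v \<times> 'v \<times> 'v \<Rightarrow> 'v \<times> 'v \<times> 'v \<times> 'v
     \<Rightarrow> 'v \<times> 'v \<times> 'v \<times> 'v" where
  "sqComp C (ya, yb, yc, yd) (xa, xb, xc, xd) =
     (vcomp C ya xa, vcomp C yb xb, vcomp C yc xc, vcomp C yd xd)"

fun triComp :: "('o, 'h, 'v, 'z) dcat_scheme \<Rightarrow> 'v \<times> 'v \<times> 'v \<Rightarrow> 'v \<times> 'v \<times> 'v \<Rightarrow> 'v \<times> 'v \<times> 'v" where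
  "triComp C (y1, y2, y3) (x1, x2, x3) = (vcomp C y1 x1, vcomp C y2 x2, vcomp C y3 x3)"

text \<open>The restriction functors i^* and j^*, on objects and on morphisms.\<close>

fun iObj :: "'h \<times> 'v \<times> 'v \<times> 'h \<Rightarrow> 'h \<times> 'v" where
  "iObj (t, l, r, b) = (t, l)"

fun iMor :: "'v \<times> 'v \<times> 'v \<times> 'v \<Rightarrow> 'v \<times> 'v \<times> 'v" where
  "iMor (xa, xb, xc, xd) = (xa, xb, xc)"

fun jObj :: "'h \<times> 'v \<times> 'v \<times> 'h \<Rightarrow> 'v \<times> 'h" where
  "jObj (t, l, r, b) = (r, b)"

fun jMor :: "'v \<times> 'v \<times> 'v \<times> 'v \<Rightarrow> 'v \<times> 'v \<times> 'v" where
  "jMor (xa, xb, xc, xd) = (xb, xc, xd)"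

text \<open>s (object part so, morphism part sm X Y x) is a functor
Fun^v(span,C) -> Fun^v(boxdot,C) which is a section of i^*.\<close>

definition span_section :: "('o, 'h, 'v, 'z) dcat_scheme \<Rightarrow> ('h \<times> 'v \<Rightarrow> 'h \<times> 'v \<times> 'v \<times> 'h)
    \<Rightarrow> ('h \<times> 'v \<Rightarrow> 'h \<times> 'v \<Rightarrow> 'v \<times> 'v \<times> 'v \<Rightarrow> 'v \<times> 'v \<times> 'v \<times> 'v) \<Rightarrow> bool" where
  "span_section C so sm \<longleftrightarrow>
     (\<forall>X. spanF C X \<longrightarrow> sqF C (so X)) \<and>
     (\<forall>X Y x. spanNT C X Y x \<longrightarrow> sqNT C (so X) (so Y) (sm X Y x)) \<and>
     (\<forall>X. spanF C X \<longrightarrow> sm X X (spanId C X) = sqId C (so X)) \<and>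
     (\<forall>X Y Z x y. spanNT C X Y x \<longrightarrow> spanNT C Y Z y \<longrightarrow>
        sm X Z (triComp C y x) = sqComp C (sm Y Z y) (sm X Y x)) \<and>
     (\<forall>X. spanF C X \<longrightarrow> iObj (so X) = X) \<and>
     (\<forall>X Y x. spanNT C X Y x \<longrightarrow> iMor (sm X Y x) = x)"

definition cospan_section :: "('o, 'h, 'v, 'z) dcat_scheme \<Rightarrow> ('v \<times> 'h \<Rightarrow> 'h \<times> 'v \<times> 'v \<times> 'h)
    \<Rightarrow> ('v \<times> 'h \<Rightarrow> 'v \<times> 'h \<Rightarrow> 'v \<times> 'v \<times> 'v \<Rightarrow> 'v \<times> 'v \<times> 'v \<times> 'v) \<Rightarrow> bool" where
  "cospan_section C to tm \<longleftrightarrow>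
     (\<forall>X. cospanF C X \<longrightarrow> sqF C (to X)) \<and>
     (\<forall>X Y x. cospanNT C X Y x \<longrightarrow> sqNT C (to X) (to Y) (tm X Y x)) \<and>
     (\<forall>X. cospanF C X \<longrightarrow> tm X X (cospanId C X) = sqId C (to X)) \<and>
     (\<forall>X Y Z x y. cospanNT C X Y x \<longrightarrow> cospanNT C Y Z y \<longrightarrow>
        tm X Z (triComp C y x) = sqComp C (tm Y Z y) (tm X Y x)) \<and>
     (\<forall>X. cospanF C X \<longrightarrow> jObj (to X) = X) \<and>
     (\<forall>X Y x. cospanNT C X Y x \<longrightarrow> jMor (tm X Y x) = x)"

text \<open>Stability: (i)-(iv).  w X is the component at X of w : s i^* => id, and
u X the component at X of u : t j^* => id.\<close>

definition stable :: "('o, 'h, 'v, 'z) dcat_scheme \<Rightarrow> 'o \<Rightarrow> bool" where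
  "stable C Z \<longleftrightarrow>
    (\<exists>so sm w. span_section C so sm \<and>
       (\<forall>X. sqF C X \<longrightarrow> sqNT C (so (iObj X)) X (w X) \<and>
          (case (X, w X) of ((t, l, r, b), (wa, wb, wc, wd)) \<Rightarrow>
             wa = vid C (hdom C t) \<and> wb = vid C (hcod C t) \<and> wc = vid C (hdom C b))) \<and>
       (\<forall>X Y x. sqNT C X Y x \<longrightarrow>
          sqComp C x (w X) = sqComp C (w Y) (sm (iObj X) (iObj Y) (iMor x)))) \<and>
    (\<exists>to tm u. cospan_section C to tm \<and>
       (\<forall>X. sqF C X \<longrightarrow> sqNT C (to (jObj X)) X (u X) \<and>
          (case (X, u X) of ((t, l, r, b), (ua, ub, uc, ud)) \<Rightarrow>
             vweq C Z ua \<and> ub = vid C (hcod C t) \<and> uc = vid C (hdom C b) \<and> ud = vid C (hcod C b))) \<and>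
       (\<forall>X Y x. sqNT C X Y x \<longrightarrow>
          sqComp C x (u X) = sqComp C (u Y) (tm (jObj X) (jObj Y) (jMor x))))"

definition isostable :: "('o, 'h, 'v, 'z) dcat_scheme \<Rightarrow> 'o \<Rightarrow> bool" where
  "isostable C Z \<longleftrightarrow> squares_cat C Z \<and> stable C Z \<and>
     (\<forall>f. vweq C Z f \<longrightarrow> viso C f) \<and>
     (\<forall>g. hweq C Z g \<longrightarrow> hiso C g) \<and>
     (\<forall>f k g h g' h'. f \<in> Hor C \<longrightarrow> k \<in> Hor C \<longrightarrow>
        vmor C g (hdom C f) (hdom C k) \<longrightarrow> vmor C h (hcod C f) (hcod C k) \<longrightarrow>
        vinverse C g' g \<longrightarrow> vinverse C h' h \<longrightarrow>
        (Sq C f g h k \<longleftrightarrow> Sq C k g' h' f))"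

text \<open>An object of S_n is a triple (A, hh, vv): objects A j k (0 <= j <= k <= n),
horizontal generators hh j k : A j k >-> A j (k+1) (j <= k < n), vertical generators
vv j k : A j k ->> A (j+1) k (j < k <= n).  Values outside these ranges are irrelevant.\<close>

fun Sn_obj :: "('o, 'h, 'v, 'z) dcat_scheme \<Rightarrow> 'o \<Rightarrow> nat
    \<Rightarrow> (nat \<Rightarrow> nat \<Rightarrow> 'o) \<times> (nat \<Rightarrow> nat \<Rightarrow> 'h) \<times> (nat \<Rightarrow> nat \<Rightarrow> 'v) \<Rightarrow> bool" where
  "Sn_obj C Z n (A, hh, vv) \<longleftrightarrow>
     (\<forall>j k. j \<le> k \<and> k \<le> n \<longrightarrow> A j k \<in> Ob C) \<and>
     (\<forall>j. j \<le> n \<longrightarrow> A j j = Z) \<and>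
     (\<forall>j k. j \<le> k \<and> k < n \<longrightarrow>
        hh j k \<in> Hor C \<and> hdom C (hh j k) = A j k \<and> hcod C (hh j k) = A j (Suc k)) \<and>
     (\<forall>j k. j < k \<and> k \<le> n \<longrightarrow>
        vv j k \<in> Ver C \<and> vdom C (vv j k) = A j k \<and> vcod C (vv j k) = A (Suc j) k) \<and>
     (\<forall>j k. j < k \<and> k < n \<longrightarrow> Sq C (hh j k) (vv j k) (vv j (Suc k)) (hh (Suc j) k))"

fun Sn_mor :: "('o, 'h, 'v, 'z) dcat_scheme \<Rightarrow> nat
    \<Rightarrow> (nat \<Rightarrow> nat \<Rightarrow> 'o) \<times> (nat \<Rightarrow> nat \<Rightarrow> 'h) \<times> (nat \<Rightarrow> nat \<Rightarrow> 'v)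
    \<Rightarrow> (nat \<Rightarrow> nat \<Rightarrow> 'o) \<times> (nat \<Rightarrow> nat \<Rightarrow> 'h) \<times> (nat \<Rightarrow> nat \<Rightarrow> 'v)
    \<Rightarrow> (nat \<Rightarrow> nat \<Rightarrow> 'v) \<Rightarrow> bool" where
  "Sn_mor C n (A, hh, vv) (A', hh', vv') phi \<longleftrightarrow>
     (\<forall>j k. j \<le> k \<and> k \<le> n \<longrightarrow> vmor C (phi j k) (A j k) (A' j k)) \<and>
     (\<forall>j k. j \<le> k \<and> k < n \<longrightarrow> Sq C (hh j k) (phi j k) (phi j (Suc k)) (hh' j k)) \<and>
     (\<forall>j k. j < k \<and> k \<le> n \<longrightarrow> vcomp C (vv' j k) (phi j k) = vcomp C (phi (Suc j) k) (vv j k))"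

text \<open>S_n C is a groupoid: every morphism has a two-sided inverse (composition and
identities are componentwise in the vertical category; morphisms are compared on
the index range 0 <= j <= k <= n).\<close>

definition Sn_groupoid :: "('o, 'h, 'v, 'z) dcat_scheme \<Rightarrow> 'o \<Rightarrow> nat \<Rightarrow> bool" where
  "Sn_groupoid C Z n \<longleftrightarrow>
     (\<forall>X Y phi. Sn_obj C Z n X \<longrightarrow> Sn_obj C Z n Y \<longrightarrow> Sn_mor C n X Y phi \<longrightarrow>
        (\<exists>psi. Sn_mor C n Y X psi \<and>
           (\<forall>j k. j \<le> k \<and> k \<le> n \<longrightarrow>
              vcomp C (psi j k) (phi j k) = vid C (fst X j k) \<and>
              vcomp C (phi j k) (psi j k) = vid C (fst Y j k))))"

end

theory Submission
  imports Defs
begin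

lemma vcat_facts:
  assumes "vcat C"
  shows "f \<in> Ver C \<Longrightarrow> vdom C f \<in> Ob C \<and> vcod C f \<in> Ob C"
    and "A \<in> Ob C \<Longrightarrow> vid C A \<in> Ver C \<and> vdom C (vid C A) = A \<and> vcod C (vid C A) = A"
    and "f \<in> Ver C \<Longrightarrow> g \<in> Ver C \<Longrightarrow> vcod C f = vdom C g \<Longrightarrow>
        vcomp C g f \<in> Ver C \<and> vdom C (vcomp C g f) = vdom C f \<and> vcod C (vcomp C g f) = vcod C g"
    and "f \<in> Ver C \<Longrightarrow> g \<in> Ver C \<Longrightarrow> k \<in> Ver C \<Longrightarrow> vcod C f = vdom C g \<Longrightarrow> vcod C g = vdom C k \<Longrightarrow>
        vcomp C k (vcomp C g f) = vcomp C (vcomp C k g) f"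
    and "f \<in> Ver C \<Longrightarrow> vcomp C f (vid C (vdom C f)) = f"
    and "f \<in> Ver C \<Longrightarrow> vcomp C (vid C (vcod C f)) f = f"
  using assms unfolding vcat_def by blast+

lemma hcat_facts:
  assumes "hcat C"
  shows "f \<in> Hor C \<Longrightarrow> hdom C f \<in> Ob C \<and> hcod C f \<in> Ob C"
    and "A \<in> Ob C \<Longrightarrow> hid C A \<in> Hor C \<and> hdom C (hid C A) = A \<and> hcod C (hid C A) = A"
    and "f \<in> Hor C \<Longrightarrow> g \<in> Hor C \<Longrightarrow> hcod C f = hdom C g \<Longrightarrow>
        hcomp C g f \<in> Hor C \<and> hdom C (hcomp C g f) = hdom C f \<and> hcod C (hcomp C g f) = hcod C g"
  using assms unfolding hcat_def by blast+

lemma vswap: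
  assumes vc: "vcat C"
    and phi: "vinverse C psi phi" and phi': "vinverse C psi' phi'"
    and vv: "vv \<in> Ver C" and vv': "vv' \<in> Ver C"
    and d1: "vdom C vv = vdom C phi" and d2: "vcod C vv = vdom C phi'"
    and d3: "vdom C vv' = vcod C phi" and d4: "vcod C vv' = vcod C phi'"
    and eq: "vcomp C vv' phi = vcomp C phi' vv"
  shows "vcomp C vv psi = vcomp C psi' vv'"
proof -
  note F = vcat_facts[OF vc]
  from phi have p: "phi \<in> Ver C" "psi \<in> Ver C" "vdom C psi = vcod C phi" "vcod C psi = vdom C phi"
    "vcomp C psi phi = vid C (vdom C phi)" "vcomp C phi psi = vid C (vcod C phi)"
    unfolding vinverse_def by auto
  from phi' have q: "phi' \<in> Ver C" "psi' \<in> Ver C" "vdom C psi' = vcod C phi'" "vcod C psi' = vdom C phi'"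
    "vcomp C psi' phi' = vid C (vdom C phi')" "vcomp C phi' psi' = vid C (vcod C phi')"
    unfolding vinverse_def by auto
  have c: "vcomp C vv psi \<in> Ver C \<and> vcod C (vcomp C vv psi) = vcod C vv"
    using F(3)[of psi vv] p vv d1 by auto
  have "vcomp C (vid C (vcod C (vcomp C vv psi))) (vcomp C vv psi) = vcomp C vv psi"
    using F(6) c by blast
  then have "vcomp C vv psi = vcomp C (vid C (vcod C vv)) (vcomp C vv psi)"
    using c by metis
  also have "\<dots> = vcomp C (vcomp C psi' phi') (vcomp C vv psi)" using q d2 by simp
  also have "\<dots> = vcomp C psi' (vcomp C phi' (vcomp C vv psi))"
    using F(3)[of psi vv] F(4)[of "vcomp C vv psi" phi' psi'] p q vv d1 d2 by auto
  also have "vcomp C phi' (vcomp C vv psi) = vcomp C (vcomp C phi' vv) psi"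
    using F(4)[of psi vv phi'] p q vv d1 d2 by auto
  also have "\<dots> = vcomp C (vcomp C vv' phi) psi" using eq by simp
  also have "\<dots> = vcomp C vv' (vcomp C phi psi)"
    using F(4)[of psi phi vv'] p vv' d3 by auto
  also have "\<dots> = vv'" using F(5)[OF vv'] d3 p(6) by simp
  finally show ?thesis .
qed

lemma hinit_unique:
  assumes "squares_cat C Z" "A \<in> Ob C"
  shows "hinit C Z A \<in> Hor C \<and> hdom C (hinit C Z A) = Z \<and> hcod C (hinit C Z A) = A"
    and "f \<in> Hor C \<Longrightarrow> hdom C f = Z \<Longrightarrow> hcod C f = A \<Longrightarrow> f = hinit C Z A"
proof -
  from assms have ex: "\<exists>!f. f \<in> Hor C \<and> hdom C f = Z \<and> hcod C f = A"
    unfolding squares_cat_def by blast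
  show "hinit C Z A \<in> Hor C \<and> hdom C (hinit C Z A) = Z \<and> hcod C (hinit C Z A) = A"
    unfolding hinit_def by (rule theI'[OF ex])
  show "f \<in> Hor C \<Longrightarrow> hdom C f = Z \<Longrightarrow> hcod C f = A \<Longrightarrow> f = hinit C Z A"
    unfolding hinit_def by (rule the1_equality[OF ex, symmetric]) auto
qed

lemma weq_step:
  assumes sc: "squares_cat C Z" and w: "vweq C Z p" and s: "Sq C t p q b"
  shows "vweq C Z q"
proof -
  have fl: "flat_dcat C" and Zo: "Z \<in> Ob C" using sc unfolding squares_cat_def by auto
  have hc: "hcat C" and vc: "vcat C" using fl unfolding flat_dcat_def by auto
  have bd: "t \<in> Hor C \<and> p \<in> Ver C \<and> q \<in> Ver C \<and> b \<in> Hor C \<and>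
        hdom C t = vdom C p \<and> hcod C t = vdom C q \<and>
        hdom C b = vcod C p \<and> hcod C b = vcod C q"
    using fl s unfolding flat_dcat_def by blast
  have s0: "Sq C (hinit C Z (vdom C p)) (vid C Z) p (hinit C Z (vcod C p))"
    using w unfolding vweq_def by auto
  have comp: "Sq C (hcomp C t (hinit C Z (vdom C p))) (vid C Z) q (hcomp C b (hinit C Z (vcod C p)))"
    using fl s0 s unfolding flat_dcat_def by blast
  have o1: "vdom C p \<in> Ob C" "vcod C p \<in> Ob C" "vdom C q \<in> Ob C" "vcod C q \<in> Ob C"
    using vcat_facts(1)[OF vc] bd by auto
  note H1 = hinit_unique[OF sc o1(1)] and H2 = hinit_unique[OF sc o1(2)]
  note H3 = hinit_unique[OF sc o1(3)] and H4 = hinit_unique[OF sc o1(4)]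
  have e1: "hcomp C t (hinit C Z (vdom C p)) = hinit C Z (vdom C q)"
    using H1(1) H3(2) hcat_facts(3)[OF hc, of "hinit C Z (vdom C p)" t] bd by auto
  have e2: "hcomp C b (hinit C Z (vcod C p)) = hinit C Z (vcod C q)"
    using H2(1) H4(2) hcat_facts(3)[OF hc, of "hinit C Z (vcod C p)" b] bd by auto
  show ?thesis unfolding vweq_def using comp e1 e2 bd by auto
qed

lemma weq_base:
  assumes sc: "squares_cat C Z" and p: "p \<in> Ver C" "vdom C p = Z" "vcod C p = Z"
  shows "vweq C Z p"
proof -
  have fl: "flat_dcat C" and Zo: "Z \<in> Ob C" using sc unfolding squares_cat_def by auto
  have hc: "hcat C" and vc: "vcat C" using fl unfolding flat_dcat_def by auto
  have u: "\<exists>!f. f \<in> Ver C \<and> vdom C f = Z \<and> vcod C f = Z" using sc Zo unfolding squares_cat_def by blast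
  have "p = vid C Z" using u p vcat_facts(2)[OF vc Zo] by blast
  moreover have "hinit C Z Z = hid C Z"
    using hinit_unique(2)[OF sc Zo] hcat_facts(2)[OF hc Zo] by auto
  moreover have "Sq C (hid C Z) (vid C Z) (vid C Z) (hid C Z)"
    using fl hcat_facts(2)[OF hc Zo] unfolding flat_dcat_def by metis
  ultimately show ?thesis unfolding vweq_def using p by auto
qed

theorem lemma3p21:
  fixes C :: "('o, 'h, 'v) dcat" and Z :: 'o
  assumes "isostable C Z"
  shows "\<forall>n. Sn_groupoid C Z n"
proof (intro allI)
  fix n
  have sc: "squares_cat C Z" using assms unfolding isostable_def by auto
  have fl: "flat_dcat C" using sc unfolding squares_cat_def by auto
  have vc: "vcat C" using fl unfolding flat_dcat_def by auto
  have wiso: "\<And>f. vweq C Z f \<Longrightarrow> viso C f" using assms unfolding isostable_def by auto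
  have swap: "\<And>f k g h g' h'. f \<in> Hor C \<Longrightarrow> k \<in> Hor C \<Longrightarrow>
        vmor C g (hdom C f) (hdom C k) \<Longrightarrow> vmor C h (hcod C f) (hcod C k) \<Longrightarrow>
        vinverse C g' g \<Longrightarrow> vinverse C h' h \<Longrightarrow>
        (Sq C f g h k \<longleftrightarrow> Sq C k g' h' f)" using assms unfolding isostable_def by blast
  show "Sn_groupoid C Z n" unfolding Sn_groupoid_def
  proof (intro allI impI)
    fix X Y phi
    assume SX: "Sn_obj C Z n X" and SY: "Sn_obj C Z n Y" and M: "Sn_mor C n X Y phi"
    obtain A hh vv where X: "X = (A, hh, vv)" by (cases X) auto
    obtain A' hh' vv' where Y: "Y = (A', hh', vv')" by (cases Y) auto
    note SX = SX[unfolded X Sn_obj.simps] and SY = SY[unfolded Y Sn_obj.simps]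
    note M = M[unfolded X Y Sn_mor.simps]
    have W: "\<forall>j. j + d \<le> n \<longrightarrow> vweq C Z (phi j (j + d))" for d
    proof (induction d)
      case 0
      show ?case
      proof (intro allI impI)
        fix j assume "j + 0 \<le> n"
        then have "vmor C (phi j j) (A j j) (A' j j)" using M by auto
        moreover have "A j j = Z" "A' j j = Z" using SX SY \<open>j + 0 \<le> n\<close> by auto
        ultimately show "vweq C Z (phi j (j + 0))" using weq_base[OF sc] unfolding vmor_def by auto
      qed
    next
      case (Suc d)
      show ?case
      proof (intro allI impI)
        fix j assume a: "j + Suc d \<le> n"
        have "vweq C Z (phi j (j + d))" using Suc a by auto
        moreover have "Sq C (hh j (j+d)) (phi j (j+d)) (phi j (Suc (j+d))) (hh' j (j+d))"
          using M a by auto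
        ultimately show "vweq C Z (phi j (j + Suc d))" using weq_step[OF sc] by auto
      qed
    qed
    have Wk: "vweq C Z (phi j k)" if "j \<le> k" "k \<le> n" for j k
    proof -
      have "j + (k - j) = k" using that by simp
      moreover have "j + (k - j) \<le> n \<longrightarrow> vweq C Z (phi j (j + (k - j)))" using W[of "k - j"] by blast
      ultimately show ?thesis using that by simp
    qed
    define psi where "psi j k = (SOME g. vinverse C g (phi j k))" for j k
    have I: "vinverse C (psi j k) (phi j k)" if "j \<le> k" "k \<le> n" for j k
      using wiso[OF Wk[OF that]] unfolding viso_def psi_def by (rule someI_ex)
    show "\<exists>psi. Sn_mor C n Y X psi \<and>
           (\<forall>j k. j \<le> k \<and> k \<le> n \<longrightarrow>
              vcomp C (psi j k) (phi j k) = vid C (fst X j k) \<and>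
              vcomp C (phi j k) (psi j k) = vid C (fst Y j k))"
    proof (rule exI[of _ psi], intro conjI allI impI)
      show "Sn_mor C n Y X psi" unfolding X Y Sn_mor.simps
      proof (intro conjI allI impI)
        fix j k assume a: "j \<le> k \<and> k \<le> n"
        have "vmor C (phi j k) (A j k) (A' j k)" using M a by blast
        then show "vmor C (psi j k) (A' j k) (A j k)" using I[of j k] a
          unfolding vinverse_def vmor_def by auto
      next
        fix j k assume a: "j \<le> k \<and> k < n"
        have i1: "vinverse C (psi j k) (phi j k)" and i2: "vinverse C (psi j (Suc k)) (phi j (Suc k))"
          using I a by auto
        have sq: "Sq C (hh j k) (phi j k) (phi j (Suc k)) (hh' j k)" using M a by auto
        have h1: "hdom C (hh j k) = A j k \<and> hcod C (hh j k) = A j (Suc k)" using SX a by blast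
        have h2: "hdom C (hh' j k) = A' j k \<and> hcod C (hh' j k) = A' j (Suc k)" using SY a by blast
        have m1: "vmor C (phi j k) (hdom C (hh j k)) (hdom C (hh' j k))"
          using M a h1 h2 by auto
        have m2: "vmor C (phi j (Suc k)) (hcod C (hh j k)) (hcod C (hh' j k))"
          using M a h1 h2 by auto
        show "Sq C (hh' j k) (psi j k) (psi j (Suc k)) (hh j k)"
        proof -
          have h: "hh j k \<in> Hor C" "hh' j k \<in> Hor C" using SX SY a by auto
          show ?thesis using swap[OF h(1) h(2) m1 m2 i1 i2] sq by simp
        qed
      next
        fix j k assume a: "j < k \<and> k \<le> n"
        have i1: "vinverse C (psi j k) (phi j k)" and i2: "vinverse C (psi (Suc j) k) (phi (Suc j) k)"
          using I a by auto
        have m1: "vmor C (phi j k) (A j k) (A' j k)" "vmor C (phi (Suc j) k) (A (Suc j) k) (A' (Suc j) k)"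
          using M a by auto
        show "vcomp C (vv j k) (psi j k) = vcomp C (psi (Suc j) k) (vv' j k)"
        proof -
          have v1: "vv j k \<in> Ver C \<and> vdom C (vv j k) = A j k \<and> vcod C (vv j k) = A (Suc j) k"
            using SX a by blast
          have v2: "vv' j k \<in> Ver C \<and> vdom C (vv' j k) = A' j k \<and> vcod C (vv' j k) = A' (Suc j) k"
            using SY a by blast
          have e: "vcomp C (vv' j k) (phi j k) = vcomp C (phi (Suc j) k) (vv j k)"
            using M a by blast
          show ?thesis
            apply (rule vswap[OF vc i1 i2])
            using v1 v2 e m1 unfolding vmor_def by simp_all
        qed
      qed
    next
      fix j k assume a: "j \<le> k \<and> k \<le> n"
      show "vcomp C (psi j k) (phi j k) = vid C (fst X j k)"
        "vcomp C (phi j k) (psi j k) = vid C (fst Y j k)"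
      proof -
        have "vmor C (phi j k) (A j k) (A' j k)" using M a by blast
        then show "vcomp C (psi j k) (phi j k) = vid C (fst X j k)"
          "vcomp C (phi j k) (psi j k) = vid C (fst Y j k)"
          using I[of j k] a X Y unfolding vinverse_def vmor_def by auto
      qed
    qed
  qed
qed

end
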